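(* Let $n\ge1$ and let $S\subseteq\mathbb{Z}_{2^n}$ with $|S|=2^{n-1}+1$. For every integer $a$ with $1\le a\le n$, $$|C(a,a,a+)|\ge\max\{|S_a|(|S_{a+}|-|L_a|+|S_a|),\;|S_{a+}|(2|S_a|-|L_a|),\;0\}.$$
   Context: Layers: for $1\le i\le n$, $L_i=\{x\in\mathbb{Z}_{2^n}: x\equiv 2^{i-1}\pmod{2^i}\}$, $L_{n+1}=\{0\}$. $S_i=S\cap L_i$ and $S_{i+}=S\cap(L_{i+1}\cup\dots\cup L_{n+1})$. $C(a,a,a+)$ is the set of ordered triples $(x,y,z)$ with $x+y=z$ in $\mathbb{Z}_{2^n}$, $x\in S_a$, $y\in S_a$, $z\in S_{a+}$. *)

theory Defs
  imports Main
begin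

text \<open>Z_{2^n} is represented by the natural numbers {0..<2^n}, addition modulo 2^n.\<close>

definition ZN :: "nat \<Rightarrow> nat set" where
  "ZN n = {0..<2^n}"

definition layer :: "nat \<Rightarrow> nat \<Rightarrow> nat set" where
  "layer n i = (if 1 \<le> i \<and> i \<le> n then {x \<in> ZN n. x mod 2^i = 2^(i-1)}
                else if i = n + 1 then {0} else {})"

definition S_layer :: "nat \<Rightarrow> nat set \<Rightarrow> nat \<Rightarrow> nat set" where
  "S_layer n S i = S \<inter> layer n i"

definition S_above :: "nat \<Rightarrow> nat set \<Rightarrow> nat \<Rightarrow> nat set" where
  "S_above n S i = S \<inter> (\<Union>j\<in>{i+1..n+1}. layer n j)"

definition C_aaa :: "nat \<Rightarrow> nat set \<Rightarrow> nat \<Rightarrow> (nat \<times> nat \<times> nat) set" where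
  "C_aaa n S a = {(x, y, z). x \<in> S_layer n S a \<and> y \<in> S_layer n S a \<and>
                   z \<in> S_above n S a \<and> (x + y) mod 2^n = z}"

end

theory Submission
  imports Defs
begin

lemma card_inter_ge:
  assumes "finite U" "X \<subseteq> U" "Y \<subseteq> U"
  shows "int (card (X \<inter> Y)) \<ge> int (card X) + int (card Y) - int (card U)"
proof -
  have fX: "finite X" "finite Y" using assms finite_subset by auto
  have "card X + card Y = card (X \<union> Y) + card (X \<inter> Y)" using card_Un_Int fX by blast
  moreover have "card (X \<union> Y) \<le> card U" using assms by (intro card_mono) auto
  ultimately show ?thesis by linarith
qed

lemma layer_a:
  assumes "1 \<le> a" "a \<le> n"
  shows "layer n a = {x \<in> ZN n. x mod 2^a = 2^(a-1)}"
  using assms by (simp add: layer_def)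

lemma B_sub:
  assumes "1 \<le> a" "a \<le> n"
  shows "S_above n S a \<subseteq> {z \<in> ZN n. z mod 2^a = 0}"
proof
  fix x assume "x \<in> S_above n S a"
  then obtain j where j: "j \<in> {a+1..n+1}" "x \<in> layer n j" by (auto simp: S_above_def)
  show "x \<in> {z \<in> ZN n. z mod 2^a = 0}"
  proof (cases "j = n+1")
    case True
    then show ?thesis using j by (simp add: layer_def ZN_def)
  next
    case False
    then have jn: "1 \<le> j" "j \<le> n" "a < j" using j by auto
    then have x: "x \<in> ZN n" "x mod 2^j = 2^(j-1)" using j by (auto simp: layer_def)
    have d1: "(2::nat)^a dvd 2^j" using jn by (simp add: le_imp_power_dvd)
    have d2: "(2::nat)^a dvd 2^(j-1)" using jn by (intro le_imp_power_dvd) auto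
    have "x mod 2^a = x mod 2^j mod 2^a" using d1 by (simp add: mod_mod_cancel)
    also have "\<dots> = 0" using x d2 by simp
    finally show ?thesis using x by simp
  qed
qed

lemma shift_in_L:
  fixes y z a n :: nat
  assumes "1 \<le> a" "a \<le> n" "y < 2^n" "y mod 2^a = 2^(a-1)" "z mod 2^a = 0"
  shows "(z + 2^n - y) mod 2^n mod 2^a = 2^(a-1)"
proof -
  have d: "(2::nat)^a dvd 2^n" using assms by (simp add: le_imp_power_dvd)
  then obtain p where p: "(2::nat)^n = 2^a * p" by blast
  obtain k where k: "y = 2^a * k + 2^(a-1)" using assms(4) div_mult_mod_eq[of y "2^a"]
    by (metis add.commute mult.commute)
  obtain m where m: "z = 2^a * m" using assms(5) by blast
  have q: "(2::nat)^a = 2 * 2^(a-1)" using assms(1)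
    by (metis Suc_diff_le diff_Suc_1 power_Suc)
  have "k < p"
  proof (rule ccontr)
    assume "\<not> k < p"
    then have "2^a * p \<le> 2^a * k" by simp
    then show False using assms(3) p k by linarith
  qed
  then obtain r where r: "p = k + 1 + r" using less_imp_Suc_add by fastforce
  define Q :: nat where "Q = 2^(a-1)"
  have w: "z + 2^n - y = 2^a * (m + r) + 2^(a-1)"
    unfolding p k m r q Q_def[symmetric] by (simp add: algebra_simps)
  have "(z + 2^n - y) mod 2^n mod 2^a = (z + 2^n - y) mod 2^a" using d by (simp add: mod_mod_cancel)
  also have "\<dots> = 2^(a-1)" unfolding w using q by simp
  finally show ?thesis .
qed

lemma sub_mod:
  fixes x y N :: nat
  assumes "x < N" "y < N"
  shows "(((x+y) mod N) + N - x) mod N = y"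
proof -
  have "int ((((x+y) mod N) + N - x) mod N) = ((int x + int y) mod int N + int N - int x) mod int N"
    using assms by (simp add: zmod_int of_nat_diff less_imp_le_nat trans_le_add2)
  also have "\<dots> = (int x + int y + int N - int x) mod int N"
    by (metis (no_types) mod_add_left_eq mod_diff_left_eq)
  also have "\<dots> = int y" using assms by simp
  finally show ?thesis by linarith
qed

lemma add_back:
  fixes x b N :: nat
  assumes "x < N" "b < N"
  shows "(x + (b + N - x) mod N) mod N = b"
proof -
  have "int ((x + (b + N - x) mod N) mod N) = (int x + (int b + int N - int x) mod int N) mod int N"
    using assms by (simp add: zmod_int of_nat_diff less_imp_le_nat trans_le_add2)
  also have "\<dots> = (int x + (int b + int N - int x)) mod int N"
    by (metis (no_types) mod_add_right_eq)
  also have "\<dots> = int b" using assms by simp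
  finally show ?thesis by linarith
qed

lemma sub_back:
  fixes z y N :: nat
  assumes "z < N" "y < N"
  shows "(z + N - (z + N - y) mod N) mod N = y"
proof -
  have "(z + N - y) mod N < N" using assms by simp
  then have le: "(z + N - y) mod N \<le> z + N" by linarith
  have "int ((z + N - (z + N - y) mod N) mod N) = (int z + int N - (int z + int N - int y) mod int N) mod int N"
    using assms le by (simp add: zmod_int of_nat_diff less_imp_le_nat trans_le_add2)
  also have "\<dots> = (int z + int N - (int z + int N - int y)) mod int N"
    by (metis (no_types) mod_diff_right_eq)
  also have "\<dots> = int y" using assms by simp
  finally show ?thesis by linarith
qed

theorem claim4p2:
  fixes n a :: nat and S :: "nat set"
  assumes "n \<ge> 1"
    and "S \<subseteq> ZN n"
    and "card S = 2^(n-1) + 1"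
    and "1 \<le> a" and "a \<le> n"
  shows "int (card (C_aaa n S a)) \<ge>
    max (int (card (S_layer n S a)) * (int (card (S_above n S a)) - int (card (layer n a)) + int (card (S_layer n S a))))
        (max (int (card (S_above n S a)) * (2 * int (card (S_layer n S a)) - int (card (layer n a)))) 0)"
proof -
  define N :: nat where "N = 2^n"
  define L where "L = layer n a"
  define A where "A = S_layer n S a"
  define B where "B = S_above n S a"
  define C where "C = C_aaa n S a"
  have Ldef: "L = {x. x < N \<and> x mod 2^a = 2^(a-1)}"
    unfolding L_def N_def using layer_a[OF assms(4,5)] by (auto simp: ZN_def)
  have finL: "finite L" unfolding Ldef by auto
  have AL: "A \<subseteq> L" unfolding A_def L_def S_layer_def by auto
  have finA: "finite A" using AL finL finite_subset by blast
  have BM: "\<And>z. z \<in> B \<Longrightarrow> z < N \<and> z mod 2^a = 0"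
    using B_sub[OF assms(4,5), of S] unfolding B_def N_def ZN_def by auto
  have finB: "finite B" using BM by (metis finite_nat_set_iff_bounded mem_Collect_eq subsetI finite_subset)
  have Cdef: "C = {(x, y, z). x \<in> A \<and> y \<in> A \<and> z \<in> B \<and> (x + y) mod N = z}"
    unfolding C_def C_aaa_def A_def B_def N_def by simp
  have shiftL: "\<And>y z. y \<in> L \<Longrightarrow> z \<in> B \<Longrightarrow> (z + N - y) mod N \<in> L"
  proof -
    fix y z assume y: "y \<in> L" and z: "z \<in> B"
    have "(z + N - y) mod N mod 2^a = 2^(a-1)"
      unfolding N_def using shift_in_L[OF assms(4,5)] y z BM unfolding Ldef N_def by auto
    moreover have "N > 0" unfolding N_def by simp
    ultimately show "(z + N - y) mod N \<in> L" unfolding Ldef by auto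
  qed
  define T where "T x = {y \<in> L. (x + y) mod N \<in> B}" for x
  have b1: "int (card C) \<ge> int (card A) * (int (card B) - int (card L) + int (card A))"
  proof -
    have "C = (\<lambda>(x,y). (x, y, (x+y) mod N)) ` (Sigma A (\<lambda>x. A \<inter> T x))"
      unfolding Cdef T_def using AL by auto
    moreover have "inj_on (\<lambda>(x,y). (x, y, (x+y) mod N)) (Sigma A (\<lambda>x. A \<inter> T x))"
      by (auto simp: inj_on_def)
    ultimately have "card C = card (Sigma A (\<lambda>x. A \<inter> T x))" by (simp add: card_image)
    also have "\<dots> = (\<Sum>x\<in>A. card (A \<inter> T x))" using finA by (simp add: card_SigmaI)
    finally have "int (card C) = (\<Sum>x\<in>A. int (card (A \<inter> T x)))" by simp
    moreover have "\<And>x. x \<in> A \<Longrightarrow> int (card (A \<inter> T x)) \<ge> int (card B) - int (card L) + int (card A)"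
    proof -
      fix x assume x: "x \<in> A"
      then have xL: "x < N" using AL Ldef by auto
      have "card B \<le> card (T x)"
      proof (rule card_inj_on_le[where f="\<lambda>b. (b + N - x) mod N"])
        show "inj_on (\<lambda>b. (b + N - x) mod N) B"
          unfolding inj_on_def using add_back xL BM by metis
        show "(\<lambda>b. (b + N - x) mod N) ` B \<subseteq> T x"
          unfolding T_def using shiftL x AL add_back xL BM by auto
        show "finite (T x)" unfolding T_def using finL by auto
      qed
      moreover have "int (card (A \<inter> T x)) \<ge> int (card A) + int (card (T x)) - int (card L)"
        by (rule card_inter_ge[OF finL AL]) (auto simp: T_def)
      ultimately show "int (card (A \<inter> T x)) \<ge> int (card B) - int (card L) + int (card A)" by linarith
    qed
    then have "(\<Sum>x\<in>A. int (card (A \<inter> T x))) \<ge> (\<Sum>x\<in>A. int (card B) - int (card L) + int (card A))"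
      by (rule sum_mono)
    ultimately show ?thesis by simp
  qed
  define R where "R z = {x \<in> L. (z + N - x) mod N \<in> A}" for z
  have b2: "int (card C) \<ge> int (card B) * (2 * int (card A) - int (card L))"
  proof -
    have "C = (\<lambda>(z,x). (x, (z + N - x) mod N, z)) ` (Sigma B (\<lambda>z. A \<inter> R z))"
    proof
      show "C \<subseteq> (\<lambda>(z,x). (x, (z + N - x) mod N, z)) ` (Sigma B (\<lambda>z. A \<inter> R z))"
      proof
        fix t assume "t \<in> C"
        then obtain x y z where t: "t = (x,y,z)" "x \<in> A" "y \<in> A" "z \<in> B" "(x+y) mod N = z"
          unfolding Cdef by auto
        have "x < N" "y < N" using t AL Ldef by auto
        then have "y = (z + N - x) mod N" using sub_mod t(5) by metis
        then show "t \<in> (\<lambda>(z,x). (x, (z + N - x) mod N, z)) ` (Sigma B (\<lambda>z. A \<inter> R z))"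
          using t AL unfolding R_def by (auto intro!: image_eqI[where x="(z,x)"])
      qed
    next
      show "(\<lambda>(z,x). (x, (z + N - x) mod N, z)) ` (Sigma B (\<lambda>z. A \<inter> R z)) \<subseteq> C"
      proof
        fix t assume "t \<in> (\<lambda>(z,x). (x, (z + N - x) mod N, z)) ` (Sigma B (\<lambda>z. A \<inter> R z))"
        then obtain z x where zx: "t = (x, (z + N - x) mod N, z)" "z \<in> B" "x \<in> A" "x \<in> R z" by auto
        have "x < N" using zx AL Ldef by auto
        then have "(x + (z + N - x) mod N) mod N = z" using add_back zx BM by metis
        then show "t \<in> C" unfolding Cdef using zx R_def by auto
      qed
    qed
    moreover have "inj_on (\<lambda>(z,x). (x, (z + N - x) mod N, z)) (Sigma B (\<lambda>z. A \<inter> R z))"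
      by (auto simp: inj_on_def)
    ultimately have "card C = card (Sigma B (\<lambda>z. A \<inter> R z))" by (simp add: card_image)
    also have "\<dots> = (\<Sum>z\<in>B. card (A \<inter> R z))" using finB finA by (simp add: card_SigmaI)
    finally have "int (card C) = (\<Sum>z\<in>B. int (card (A \<inter> R z)))" by simp
    moreover have "\<And>z. z \<in> B \<Longrightarrow> int (card (A \<inter> R z)) \<ge> 2 * int (card A) - int (card L)"
    proof -
      fix z assume z: "z \<in> B"
      then have zN: "z < N" using BM by auto
      have "card A \<le> card (R z)"
      proof (rule card_inj_on_le[where f="\<lambda>y. (z + N - y) mod N"])
        show "inj_on (\<lambda>y. (z + N - y) mod N) A"
          unfolding inj_on_def using sub_back zN AL Ldef by (metis (no_types, lifting) mem_Collect_eq subsetD)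
        show "(\<lambda>y. (z + N - y) mod N) ` A \<subseteq> R z"
        proof
          fix w assume "w \<in> (\<lambda>y. (z + N - y) mod N) ` A"
          then obtain y where y: "y \<in> A" "w = (z + N - y) mod N" by auto
          have "y < N" using y AL Ldef by auto
          then have "(z + N - w) mod N = y" using y sub_back zN by metis
          then show "w \<in> R z" unfolding R_def using y shiftL z AL by auto
        qed
        show "finite (R z)" unfolding R_def using finL by auto
      qed
      moreover have "int (card (A \<inter> R z)) \<ge> int (card A) + int (card (R z)) - int (card L)"
        by (rule card_inter_ge[OF finL AL]) (auto simp: R_def)
      ultimately show "int (card (A \<inter> R z)) \<ge> 2 * int (card A) - int (card L)" by linarith
    qed
    then have "(\<Sum>z\<in>B. int (card (A \<inter> R z))) \<ge> (\<Sum>z\<in>B. 2 * int (card A) - int (card L))"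
      by (rule sum_mono)
    ultimately show ?thesis by simp
  qed
  show ?thesis using b1 b2 unfolding A_def B_def C_def L_def by simp
qed

end
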